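(* Let $p$ be a prime, $k=\mathbb{F}_p$, and $V$ a $k$-vector space. Then the map $\Psi:\widehat{V}\to V^{**}$, $\Psi((x_{\mathbf{v}})_{\mathbf{v}})=\big(f\mapsto x_{\mathbf{v}_f}\big)$, is an isomorphism, and $\Psi\circ\widehat{\pi}=i$, where $\widehat{\pi}:V\to\widehat V$ is the profinite projection and $i:V\to V^{**}$ is the canonical map $i(v)(f)=f(v)$.
   Context: A finite approximation of a group $G$ is a pair $\mathbf{v}=(F_{\mathbf{v}},\varphi_{\mathbf{v}})$ with $F_{\mathbf{v}}$ a finite group and $\varphi_{\mathbf{v}}:G\to F_{\mathbf{v}}$ a group homomorphism; a morphism $f:\mathbf{v}\to\mathbf{v}'$ is a group homomorphism $f:F_{\mathbf{v}}\to F_{\mathbf{v}'}$ with $f\circ\varphi_{\mathbf{v}}=\varphi_{\mathbf{v}'}$. The profinite completion of $G$ is $\widehat{G}=\{(g_{\mathbf{v}})_{\mathbf{v}}\in\prod_{\mathbf{v}}F_{\mathbf{v}} : \psi(g_{\mathbf{v}})=g_{\mathbf{w}} \text{ for every morphism } \psi:\mathbf{v}\to\mathbf{w}\}$, the product over all finite approximations of $G$ (set-theoretic size issues ignored), with componentwise group law, and the profinite projection is $\widehat{\pi}:G\to\widehat G$, $g\mapsto(\varphi_{\mathbf{v}}(g))_{\mathbf{v}}$. $\widehat{V}$ denotes the profinite completion of the additive group of $V$. For $f\in V^*$, $\mathbf{v}_f=(k,f)$ is the finite approximation of $V$ into the additive group of $k$ given by $f$; for $\mathbf{x}\in\widehat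 V$ the map $f\mapsto x_{\mathbf{v}_f}$ is $k$-linear, so $\Psi$ takes values in $V^{**}$. *)

theory Defs
  imports Main "HOL-Algebra.Group" "Berlekamp_Zassenhaus.Finite_Field"
begin

definition add_grp :: "'v::ab_group_add monoid" where
  "add_grp = \<lparr>carrier = UNIV, monoid.mult = (+), one = 0\<rparr>"

text \<open>A finite approximation of G: a finite group F (represented with carrier a set of
  naturals; every finite group is isomorphic to such a one) together with a homomorphism
  phi : G \<rightarrow> F (extensional, i.e. undefined outside carrier G).\<close>
definition fin_approx :: "'a monoid \<Rightarrow> nat monoid \<times> ('a \<Rightarrow> nat) \<Rightarrow> bool" where
  "fin_approx G v \<longleftrightarrow> group (fst v) \<and> finite (carrier (fst v)) \<and> snd v \<in> hom G (fst v)
     \<and> (\<forall>a. a \<notin> carrier G \<longrightarrow> snd v a = undefined)"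

definition approx_mor ::
  "'a monoid \<Rightarrow> nat monoid \<times> ('a \<Rightarrow> nat) \<Rightarrow> nat monoid \<times> ('a \<Rightarrow> nat) \<Rightarrow> (nat \<Rightarrow> nat) \<Rightarrow> bool" where
  "approx_mor G v w \<psi> \<longleftrightarrow> \<psi> \<in> hom (fst v) (fst w) \<and> (\<forall>a\<in>carrier G. \<psi> (snd v a) = snd w a)"

definition prof_compl :: "'a monoid \<Rightarrow> (nat monoid \<times> ('a \<Rightarrow> nat) \<Rightarrow> nat) monoid" where
  "prof_compl G = \<lparr>carrier =
      {x. (\<forall>v. fin_approx G v \<longrightarrow> x v \<in> carrier (fst v))
        \<and> (\<forall>v. \<not> fin_approx G v \<longrightarrow> x v = undefined)
        \<and> (\<forall>v w \<psi>. fin_approx G v \<and> fin_approx G w \<and> approx_mor G v w \<psi> \<longrightarrow> \<psi> (x v) = x w)},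
    monoid.mult = (\<lambda>x y v. if fin_approx G v then x v \<otimes>\<^bsub>fst v\<^esub> y v else undefined),
    one = (\<lambda>v. if fin_approx G v then \<one>\<^bsub>fst v\<^esub> else undefined)\<rparr>"

definition prof_proj :: "'a monoid \<Rightarrow> 'a \<Rightarrow> (nat monoid \<times> ('a \<Rightarrow> nat) \<Rightarrow> nat)" where
  "prof_proj G g = (\<lambda>v. if fin_approx G v then snd v g else undefined)"

definition enc :: "'p::prime_card mod_ring \<Rightarrow> nat" where
  "enc a = nat (to_int_mod_ring a)"

text \<open>The finite approximation v_f = (k, f) of V (k's additive group, encoded on {0..<p}).\<close>
definition approx_of :: "('v \<Rightarrow> 'p::prime_card mod_ring) \<Rightarrow> nat monoid \<times> ('v \<Rightarrow> nat)" where
  "approx_of f = (\<lparr>carrier = enc ` (UNIV :: 'p mod_ring set),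
                   monoid.mult = (\<lambda>a b. enc ((of_nat a + of_nat b) :: 'p mod_ring)),
                   one = 0\<rparr>, enc \<circ> f)"

definition dual_sp :: "('p::field \<Rightarrow> 'v::ab_group_add \<Rightarrow> 'v) \<Rightarrow> ('v \<Rightarrow> 'p) set" where
  "dual_sp scale = {f. Vector_Spaces.linear scale (*) f}"

definition ddual_sp :: "('p::field \<Rightarrow> 'v::ab_group_add \<Rightarrow> 'v) \<Rightarrow> (('v \<Rightarrow> 'p) \<Rightarrow> 'p) set" where
  "ddual_sp scale = {\<Phi>. (\<forall>f. f \<notin> dual_sp scale \<longrightarrow> \<Phi> f = 0)
      \<and> (\<forall>f\<in>dual_sp scale. \<forall>g\<in>dual_sp scale. \<Phi> (\<lambda>v. f v + g v) = \<Phi> f + \<Phi> g)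
      \<and> (\<forall>c. \<forall>f\<in>dual_sp scale. \<Phi> (\<lambda>v. c * f v) = c * \<Phi> f)}"

definition ddual_grp :: "('p::field \<Rightarrow> 'v::ab_group_add \<Rightarrow> 'v) \<Rightarrow> (('v \<Rightarrow> 'p) \<Rightarrow> 'p) monoid" where
  "ddual_grp scale = \<lparr>carrier = ddual_sp scale, monoid.mult = (\<lambda>\<Phi> \<Theta> f. \<Phi> f + \<Theta> f), one = (\<lambda>f. 0)\<rparr>"

definition can_map :: "('p::field \<Rightarrow> 'v::ab_group_add \<Rightarrow> 'v) \<Rightarrow> 'v \<Rightarrow> ('v \<Rightarrow> 'p) \<Rightarrow> 'p" where
  "can_map scale v = (\<lambda>f. if f \<in> dual_sp scale then f v else 0)"

definition Psi :: "('p::prime_card mod_ring \<Rightarrow> 'v::ab_group_add \<Rightarrow> 'v)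
    \<Rightarrow> (nat monoid \<times> ('v \<Rightarrow> nat) \<Rightarrow> nat) \<Rightarrow> ('v \<Rightarrow> 'p mod_ring) \<Rightarrow> 'p mod_ring" where
  "Psi scale x = (\<lambda>f. if f \<in> dual_sp scale then of_nat (x (approx_of f)) else 0)"

end

theory Submission imports Defs "HOL-Library.Product_Plus" begin

lemma to_int_bounds: "0 \<le> to_int_mod_ring (x::'p::finite mod_ring) \<and> to_int_mod_ring x < int CARD('p)"
  using range_to_int_mod_ring[where 'a='p] by (metis atLeastLessThan_iff rangeI)

lemma of_nat_enc[simp]: "of_nat (enc (x::'p::prime_card mod_ring)) = x"
proof -
  have "of_nat (enc x) = (of_int (to_int_mod_ring x) :: 'p mod_ring)"
    unfolding enc_def using to_int_bounds[of x] by (metis of_int_of_nat_eq int_nat_eq)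
  also have "\<dots> = x" by (simp add: of_int_of_int_mod_ring)
  finally show ?thesis .
qed

lemma enc_lt: "enc (x::'p::prime_card mod_ring) < CARD('p)"
  unfolding enc_def using to_int_bounds[of x] by auto

lemma enc_inj: "enc (x::'p::prime_card mod_ring) = enc y \<longleftrightarrow> x = y"
  by (metis of_nat_enc)

lemma enc_0[simp]: "enc (0::'p::prime_card mod_ring) = 0"
  by (metis enc_def nat_0 to_int_mod_ring.rep_eq zero_mod_ring.rep_eq)

definition egrp :: "('b \<Rightarrow> nat) \<Rightarrow> (nat \<Rightarrow> 'b::ab_group_add) \<Rightarrow> nat monoid" where
  "egrp e d = \<lparr>carrier = range e, monoid.mult = (\<lambda>a b. e (d a + d b)), one = e 0\<rparr>"

lemma egrp_group:
  assumes de: "\<And>x. d (e x) = x"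
  shows "group (egrp e d)"
proof (rule groupI)
  show "\<And>x y. x \<in> carrier (egrp e d) \<Longrightarrow> y \<in> carrier (egrp e d) \<Longrightarrow> x \<otimes>\<^bsub>egrp e d\<^esub> y \<in> carrier (egrp e d)"
    by (auto simp: egrp_def)
  show "\<one>\<^bsub>egrp e d\<^esub> \<in> carrier (egrp e d)" by (auto simp: egrp_def)
  show "\<And>x y z. x \<in> carrier (egrp e d) \<Longrightarrow> y \<in> carrier (egrp e d) \<Longrightarrow> z \<in> carrier (egrp e d) \<Longrightarrow>
     x \<otimes>\<^bsub>egrp e d\<^esub> y \<otimes>\<^bsub>egrp e d\<^esub> z = x \<otimes>\<^bsub>egrp e d\<^esub> (y \<otimes>\<^bsub>egrp e d\<^esub> z)"
    by (auto simp: egrp_def de add.assoc)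
  show "\<And>x. x \<in> carrier (egrp e d) \<Longrightarrow> \<one>\<^bsub>egrp e d\<^esub> \<otimes>\<^bsub>egrp e d\<^esub> x = x"
    by (auto simp: egrp_def de)
  show "\<And>x. x \<in> carrier (egrp e d) \<Longrightarrow> \<exists>y\<in>carrier (egrp e d). y \<otimes>\<^bsub>egrp e d\<^esub> x = \<one>\<^bsub>egrp e d\<^esub>"
    apply (clarsimp simp: egrp_def de) by (metis add.left_inverse)
qed

lemma approx_of_egrp: "fst (approx_of (f::'v \<Rightarrow> 'p::prime_card mod_ring)) = egrp (enc :: 'p mod_ring \<Rightarrow> nat) of_nat"
  by (simp add: approx_of_def egrp_def)

lemma group_add_grp: "group (add_grp :: 'v::ab_group_add monoid)"
  by (rule groupI) (auto simp: add_grp_def add.assoc intro: exI[of _ "- _"])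

lemma carrier_add_grp[simp]: "carrier add_grp = UNIV" and mult_add_grp[simp]: "x \<otimes>\<^bsub>add_grp\<^esub> y = x + y"
  and one_add_grp[simp]: "\<one>\<^bsub>add_grp\<^esub> = 0"
  by (auto simp: add_grp_def)

lemma fin_approx_egrp:
  fixes h :: "'v::ab_group_add \<Rightarrow> 'b::{ab_group_add,finite}"
  assumes de: "\<And>x. d (e x) = x" and hadd: "\<And>x y. h (x + y) = h x + h y"
  shows "fin_approx add_grp (egrp e d, e \<circ> h)"
  unfolding fin_approx_def
  using egrp_group[OF de] by (auto simp: egrp_def hom_def de hadd)

lemma vs_field: "vector_space ((*) :: 'a::field \<Rightarrow> 'a \<Rightarrow> 'a)"
  by unfold_locales (auto simp: algebra_simps)

context
  fixes scale :: "'p::prime_card mod_ring \<Rightarrow> 'v::ab_group_add \<Rightarrow> 'v"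
  assumes VS: "vector_space scale"
begin

interpretation V: vector_space scale by (rule VS)
interpretation VP: vector_space_pair scale "(*)"
  by (intro vector_space_pair.intro VS vs_field)

abbreviation lin where "lin f \<equiv> Vector_Spaces.linear scale (*) f"

lemma lin_add: "lin f \<Longrightarrow> f (x + y) = f x + f y"
  by (simp add: VP.linear_add)
lemma lin_scale: "lin f \<Longrightarrow> f (scale c x) = c * f x"
  by (simp add: VP.linear_scale)
lemma lin_diff: "lin f \<Longrightarrow> f (x - y) = f x - f y"
  by (simp add: VP.linear_diff)

lemma closed_scale:
  assumes "0 \<in> K" "\<And>a b. a \<in> K \<Longrightarrow> b \<in> K \<Longrightarrow> a + b \<in> K" "a \<in> K"
  shows "scale c a \<in> K"
proof -
  have "scale (of_nat n) a \<in> K" for n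
  proof (induction n)
    case 0 then show ?case using assms by simp
  next
    case (Suc n)
    have "scale (of_nat (Suc n)) a = a + scale (of_nat n) a"
      by (simp add: V.scale_left_distrib)
    then show ?case using Suc assms by simp
  qed
  from this[of "enc c"] show ?thesis by simp
qed

lemma sep:
  assumes K: "V.subspace K" and u: "u \<notin> K"
  shows "\<exists>f. lin f \<and> (\<forall>a\<in>K. f a = 0) \<and> f u = 1"
proof -
  obtain B where B: "B \<subseteq> K" "V.independent B" "K \<subseteq> V.span B"
    using V.maximal_independent_subset[of K] by blast
  have "V.span B \<subseteq> K" using V.span_minimal[OF B(1) K] .
  then have uB: "u \<notin> V.span B" using u by blast
  have ind: "V.independent (insert u B)" using V.independent_insertI[OF uB B(2)] .
  define f where "f = VP.construct (insert u B) (\<lambda>b. if b = u then 1 else 0)"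
  have lf: "lin f" unfolding f_def using VP.linear_construct[OF ind] .
  have fB: "f b = 0" if "b \<in> B" for b
  proof -
    have "b \<noteq> u" using that B(1) u by blast
    then show ?thesis unfolding f_def using VP.construct_basis[OF ind, of b] that by simp
  qed
  have "\<forall>a\<in>K. f a = 0"
    using VP.linear_eq_0_on_span[OF lf] fB B(3) by blast
  moreover have "f u = 1" unfolding f_def using VP.construct_basis[OF ind, of u] by simp
  ultimately show ?thesis using lf by blast
qed

lemma lin_cmul: assumes lf: "lin f" shows "lin (\<lambda>x. c * f x)"
  unfolding Vector_Spaces.linear_iff
proof (intro conjI VS vs_field allI)
  fix x y show "c * f (x + y) = c * f x + c * f y" by (simp add: lin_add[OF lf] distrib_left)
next
  fix d x show "c * f (scale d x) = d * (c * f x)" by (simp add: lin_scale[OF lf] mult.left_commute)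
qed

lemma lin_zero: "lin (\<lambda>x. 0)"
  by (rule VP.linear_zero)

lemma lin_sum: "(\<And>c. c \<in> S \<Longrightarrow> lin (h c)) \<Longrightarrow> lin (\<lambda>x. \<Sum>c\<in>S. h c x)"
  by (rule VP.linear_compose_sum) (rule ballI)

lemma dual_iff[simp]: "f \<in> dual_sp scale \<longleftrightarrow> lin f"
  by (simp add: dual_sp_def)

lemma dd_add:
  assumes P: "\<Phi> \<in> ddual_sp scale" and "lin f" "lin g"
  shows "\<Phi> (\<lambda>v. f v + g v) = \<Phi> f + \<Phi> g"
proof -
  from P have H: "\<forall>f. lin f \<longrightarrow> (\<forall>g. lin g \<longrightarrow> \<Phi> (\<lambda>v. f v + g v) = \<Phi> f + \<Phi> g)"
    by (simp add: ddual_sp_def dual_sp_def)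
  show ?thesis using H[rule_format, OF assms(2,3)] .
qed

lemma dd_scale:
  assumes P: "\<Phi> \<in> ddual_sp scale" and "lin f"
  shows "\<Phi> (\<lambda>v. c * f v) = c * \<Phi> f"
proof -
  from P have H: "\<forall>c f. lin f \<longrightarrow> \<Phi> (\<lambda>v. c * f v) = c * \<Phi> f"
    by (simp add: ddual_sp_def dual_sp_def)
  show ?thesis using H[rule_format, OF assms(2)] .
qed

lemma dd_out:
  assumes P: "\<Phi> \<in> ddual_sp scale" and "\<not> lin f"
  shows "\<Phi> f = 0"
  using P assms(2) by (simp add: ddual_sp_def dual_sp_def)

lemma Phi_sum:
  assumes P: "\<Phi> \<in> ddual_sp scale" and S: "finite S" and h: "\<And>c. c \<in> S \<Longrightarrow> lin (h c)"
  shows "\<Phi> (\<lambda>x. \<Sum>c\<in>S. a c * h c x) = (\<Sum>c\<in>S. a c * \<Phi> (h c))"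
  using S h
proof (induction S rule: finite_induct)
  case empty
  have z: "lin (\<lambda>x::'v. 0::'p mod_ring)" using lin_zero .
  have "\<Phi> (\<lambda>v. 0) = 0" using dd_scale[OF P z, where c=0] by simp
  then show ?case by simp
next
  case (insert c S)
  have hc: "lin (h c)" using insert.prems by simp
  have l1: "lin (\<lambda>x. a c * h c x)" using lin_cmul[OF hc] .
  have l2: "lin (\<lambda>x. \<Sum>c\<in>S. a c * h c x)" using insert.prems lin_cmul by (intro lin_sum) simp
  have "\<Phi> (\<lambda>x. \<Sum>c\<in>insert c S. a c * h c x) = \<Phi> (\<lambda>x. (\<lambda>x. a c * h c x) x + (\<lambda>x. \<Sum>c\<in>S. a c * h c x) x)"
    using insert.hyps by simp
  also have "\<dots> = \<Phi> (\<lambda>x. a c * h c x) + \<Phi> (\<lambda>x. \<Sum>c\<in>S. a c * h c x)"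
    by (rule dd_add[OF P l1 l2])
  also have "\<Phi> (\<lambda>x. a c * h c x) = a c * \<Phi> (h c)"
    by (rule dd_scale[OF P hc])
  also have "\<Phi> (\<lambda>x. \<Sum>c\<in>S. a c * h c x) = (\<Sum>c\<in>S. a c * \<Phi> (h c))"
    using insert.IH insert.prems by simp
  finally show ?case using insert.hyps by simp
qed

lemma rep:
  fixes \<phi> :: "'v \<Rightarrow> 'b"
  assumes K: "V.subspace K" and fin: "finite (range \<phi>)"
    and phiK: "\<And>a b. \<phi> a = \<phi> b \<Longrightarrow> a - b \<in> K"
    and P: "\<Phi> \<in> ddual_sp scale"
  shows "\<exists>u. \<forall>f. lin f \<and> (\<forall>a\<in>K. f a = 0) \<longrightarrow> f u = \<Phi> f"
proof -
  obtain BK where BK: "BK \<subseteq> K" "V.independent BK" "K \<subseteq> V.span BK"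
    using V.maximal_independent_subset[of K] by blast
  define B where "B = V.extend_basis BK"
  have B: "BK \<subseteq> B" "V.independent B" "V.span B = UNIV"
    unfolding B_def using V.extend_basis_superset[OF BK(2)] V.independent_extend_basis[OF BK(2)]
      V.span_extend_basis[OF BK(2)] by simp_all
  define C where "C = B - BK"
  have inj: "inj_on \<phi> C"
  proof (rule inj_onI, rule ccontr)
    fix c c' assume c: "c \<in> C" "c' \<in> C" "\<phi> c = \<phi> c'" "c \<noteq> c'"
    have "c - c' \<in> V.span BK" using phiK[OF c(3)] BK(3) by blast
    moreover have sub: "BK \<subseteq> B - {c}" using c(1) B(1) unfolding C_def by blast
    ultimately have "c - c' \<in> V.span (B - {c})" using V.span_mono[OF sub] by blast
    moreover have "c' \<in> V.span (B - {c})" using c unfolding C_def by (intro V.span_base) blast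
    ultimately have "(c - c') + c' \<in> V.span (B - {c})" by (rule V.span_add)
    then have "c \<in> V.span (B - {c})" by simp
    moreover have "c \<in> B" using c(1) unfolding C_def by simp
    ultimately have "V.dependent B" unfolding V.dependent_def by (rule bexI)
    then show False using B(2) by blast
  qed
  have finC: "finite C"
  proof -
    have "\<phi> ` C \<subseteq> range \<phi>" by (rule image_mono) simp
    then have "finite (\<phi> ` C)" using fin by (rule finite_subset)
    then show ?thesis using inj by (rule finite_imageD)
  qed
  define d where "d c = VP.construct B (\<lambda>b. if b = c then 1 else 0)" for c
  have ld: "lin (d c)" for c unfolding d_def using VP.linear_construct[OF B(2)] .
  have db: "d c b = (if b = c then 1 else 0)" if "b \<in> B" for c b
    unfolding d_def using VP.construct_basis[OF B(2) that] .
  define u where "u = (\<Sum>c\<in>C. scale (\<Phi> (d c)) c)"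
  have "f u = \<Phi> f" if lf: "lin f" and fK: "\<forall>a\<in>K. f a = 0" for f
  proof -
    define g where "g = (\<lambda>x. \<Sum>c\<in>C. f c * d c x)"
    have lg: "lin g" unfolding g_def using ld lin_cmul by (intro lin_sum) auto
    have fg: "f = g"
    proof
      fix x
      show "f x = g x"
      proof (rule VP.linear_eq_on[OF lf lg])
        show "x \<in> V.span B" using B(3) by simp
      next
        fix b assume b: "b \<in> B"
        show "f b = g b"
        proof (cases "b \<in> BK")
          case True
          then have "f b = 0" using fK BK(1) by blast
          moreover have "g b = 0" unfolding g_def using True b
            by (intro sum.neutral) (auto simp: db C_def)
          ultimately show ?thesis by simp
        next
          case False
          then have bC: "b \<in> C" using b unfolding C_def by blast
          have "g b = (\<Sum>c\<in>C. f c * (if b = c then 1 else 0))"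
            unfolding g_def using b by (simp add: db)
          also have "\<dots> = (\<Sum>c\<in>C. if b = c then f c else 0)" by (rule sum.cong) auto
          also have "\<dots> = f b" using bC finC by simp
          finally show ?thesis by simp
        qed
      qed
    qed
    have "\<Phi> g = (\<Sum>c\<in>C. f c * \<Phi> (d c))"
      unfolding g_def by (rule Phi_sum[OF P finC ld])
    then have e1: "\<Phi> f = (\<Sum>c\<in>C. f c * \<Phi> (d c))" using fg by (simp only:)
    have "f u = (\<Sum>c\<in>C. f (scale (\<Phi> (d c)) c))"
      unfolding u_def by (rule VP.linear_sum[OF lf])
    also have "\<dots> = (\<Sum>c\<in>C. f c * \<Phi> (d c))"
      by (rule sum.cong) (simp_all add: lin_scale[OF lf] mult.commute)
    finally show ?thesis using e1 by (simp only:)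
  qed
  then show ?thesis by blast
qed


definition kerv :: "nat monoid \<times> ('v \<Rightarrow> nat) \<Rightarrow> 'v set" where
  "kerv v = {a. snd v a = \<one>\<^bsub>fst v\<^esub>}"

lemma fa_group_hom: "fin_approx add_grp v \<Longrightarrow> group_hom add_grp (fst v) (snd v)"
  unfolding fin_approx_def group_hom_def group_hom_axioms_def using group_add_grp by blast

lemma fa_in: "fin_approx add_grp v \<Longrightarrow> snd v a \<in> carrier (fst v)"
  using hom_in_carrier[of "snd v" add_grp "fst v" a] unfolding fin_approx_def by simp

lemma fa_add: "fin_approx add_grp v \<Longrightarrow> snd v (a + b) = snd v a \<otimes>\<^bsub>fst v\<^esub> snd v b"
  using hom_mult[of "snd v" add_grp "fst v" a b] unfolding fin_approx_def by simp

lemma fa_grp: "fin_approx add_grp v \<Longrightarrow> group (fst v)"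
  unfolding fin_approx_def by blast

lemma fa_zero: "fin_approx add_grp v \<Longrightarrow> snd v 0 = \<one>\<^bsub>fst v\<^esub>"
  using group_hom.hom_one[OF fa_group_hom] by fastforce

lemma fa_eq_ker: 
  assumes v: "fin_approx add_grp v"
  shows "snd v a = snd v b \<longleftrightarrow> a - b \<in> kerv v"
proof -
  have eq: "snd v a = snd v (a - b) \<otimes>\<^bsub>fst v\<^esub> snd v b" using fa_add[OF v, of "a - b" b] by simp
  have rc: "(snd v (a - b) \<otimes>\<^bsub>fst v\<^esub> snd v b = snd v b) = (snd v (a - b) = \<one>\<^bsub>fst v\<^esub>)"
    by (rule group.r_cancel_one[OF fa_grp[OF v] fa_in[OF v, of b] fa_in[OF v, of "a - b"]])
  show ?thesis unfolding kerv_def mem_Collect_eq eq by (rule rc)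
qed

lemma kerv_subspace:
  assumes v: "fin_approx add_grp v"
  shows "V.subspace (kerv v)"
proof -
  have 0: "0 \<in> kerv v" using fa_zero[OF v] by (simp add: kerv_def)
  have add: "a + b \<in> kerv v" if "a \<in> kerv v" "b \<in> kerv v" for a b
  proof -
    have "snd v a = \<one>\<^bsub>fst v\<^esub>" "snd v b = \<one>\<^bsub>fst v\<^esub>" using that by (auto simp: kerv_def)
    then have "snd v (a + b) = \<one>\<^bsub>fst v\<^esub> \<otimes>\<^bsub>fst v\<^esub> \<one>\<^bsub>fst v\<^esub>" using fa_add[OF v, of a b] by simp
    also have "\<dots> = \<one>\<^bsub>fst v\<^esub>" using monoid.l_one[OF group.is_monoid[OF fa_grp[OF v]]] monoid.one_closed[OF group.is_monoid[OF fa_grp[OF v]]] by blast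
    finally show ?thesis by (simp add: kerv_def)
  qed
  show ?thesis unfolding V.subspace_def using 0 add closed_scale[OF 0 add] by blast
qed

lemma fa_finite: assumes "fin_approx add_grp v" shows "finite (range (snd v))"
proof -
  have "range (snd v) \<subseteq> carrier (fst v)" using fa_in[OF assms] by blast
  moreover have "finite (carrier (fst v))" using assms unfolding fin_approx_def by blast
  ultimately show ?thesis by (rule finite_subset)
qed

lemma fa_same:
  assumes v: "fin_approx add_grp v"
    and H: "\<And>f. lin f \<Longrightarrow> (\<forall>a\<in>kerv v. f a = 0) \<Longrightarrow> f a = f b"
  shows "snd v a = snd v b"
proof (rule ccontr)
  assume "snd v a \<noteq> snd v b"
  then have "a - b \<notin> kerv v" using fa_eq_ker[OF v] by blast
  then obtain f where f: "lin f" "\<forall>a\<in>kerv v. f a = 0" "f (a - b) = 1"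
    using sep[OF kerv_subspace[OF v]] by blast
  then show False using H[OF f(1,2)] lin_diff[OF f(1)] by simp
qed


lemma prof_carrier_unf: "carrier (prof_compl G) =
   {x. (\<forall>v. fin_approx G v \<longrightarrow> x v \<in> carrier (fst v))
        \<and> (\<forall>v. \<not> fin_approx G v \<longrightarrow> x v = undefined)
        \<and> (\<forall>v w \<psi>. fin_approx G v \<and> fin_approx G w \<and> approx_mor G v w \<psi> \<longrightarrow> \<psi> (x v) = x w)}"
  unfolding prof_compl_def by (rule partial_object.select_convs(1))

lemma prof_compat: assumes "x \<in> carrier (prof_compl G)" "fin_approx G v" "fin_approx G w"
   "approx_mor G v w \<psi>" shows "\<psi> (x v) = x w"
proof -
  note H = assms(1)[unfolded prof_carrier_unf mem_Collect_eq, THEN conjunct2, THEN conjunct2]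
  show ?thesis using H[rule_format, OF conjI[OF assms(2) conjI[OF assms(3) assms(4)]]] .
qed

lemma prof_in: assumes "x \<in> carrier (prof_compl G)" "fin_approx G v" shows "x v \<in> carrier (fst v)"
proof -
  note H = assms(1)[unfolded prof_carrier_unf mem_Collect_eq, THEN conjunct1]
  show ?thesis using H[rule_format, OF assms(2)] .
qed

lemma prof_undef: assumes "x \<in> carrier (prof_compl G)" "\<not> fin_approx G v" shows "x v = undefined"
proof -
  note H = assms(1)[unfolded prof_carrier_unf mem_Collect_eq, THEN conjunct2, THEN conjunct1]
  show ?thesis using H[rule_format, OF assms(2)] .
qed

definition img :: "nat monoid \<times> ('v \<Rightarrow> nat) \<Rightarrow> nat monoid \<times> ('v \<Rightarrow> nat)" where
  "img v = ((fst v)\<lparr>carrier := range (snd v)\<rparr>, snd v)"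

lemma img_fa:
  assumes v: "fin_approx add_grp v"
  shows "fin_approx add_grp (img v)"
proof -
  have sg: "subgroup (range (snd v)) (fst v)"
    using group_hom.img_is_subgroup[OF fa_group_hom[OF v]] by simp
  have g: "group (fst (img v))" unfolding img_def
    using group.subgroup_imp_group[OF fa_grp[OF v] sg] by simp
  have fin: "finite (carrier (fst (img v)))" unfolding img_def using fa_finite[OF v] by simp
  have h: "snd (img v) \<in> hom add_grp (fst (img v))"
    unfolding img_def hom_def using fa_add[OF v] by auto
  show ?thesis unfolding fin_approx_def using g fin h by simp
qed

lemma img_mor:
  assumes v: "fin_approx add_grp v"
  shows "approx_mor add_grp (img v) v id"
  unfolding approx_mor_def img_def hom_def using fa_in[OF v] by auto

lemma x_img:
  assumes x: "x \<in> carrier (prof_compl add_grp)" and v: "fin_approx add_grp v"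
  shows "x (img v) = x v" "x v \<in> range (snd v)"
proof -
  show e: "x (img v) = x v" using prof_compat[OF x img_fa[OF v] v img_mor[OF v]] by simp
  have "x (img v) \<in> carrier (fst (img v))" using prof_in[OF x img_fa[OF v]] .
  then show "x v \<in> range (snd v)" using e by (simp add: img_def)
qed

lemma approx_of_eq: "approx_of (f :: 'v \<Rightarrow> 'p mod_ring) = (egrp (enc :: 'p mod_ring \<Rightarrow> nat) of_nat, enc \<circ> f)"
  by (simp add: approx_of_def egrp_def)

lemma fa_approx_of:
  assumes f: "lin f"
  shows "fin_approx add_grp (approx_of f)"
  unfolding approx_of_eq by (rule fin_approx_egrp) (auto simp: lin_add[OF f])

lemma kerv_approx_of:
  assumes "a \<in> kerv (approx_of f)"
  shows "f a = 0"
proof -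
  have "enc (f a) = enc 0" using assms by (simp add: kerv_def approx_of_def)
  then show ?thesis by (metis enc_inj)
qed

lemma factor:
  assumes v: "fin_approx add_grp v" and f: "lin f" and fK: "\<forall>a\<in>kerv v. f a = 0"
  shows "\<exists>\<psi>. approx_mor add_grp (img v) (approx_of f) \<psi> \<and> (\<forall>a. \<psi> (snd v a) = enc (f a))"
proof -
  define \<psi> where "\<psi> n = enc (f (SOME a. snd v a = n))" for n
  have key: "\<psi> (snd v a) = enc (f a)" for a
  proof -
    define a' where "a' = (SOME a'. snd v a' = snd v a)"
    have "snd v a' = snd v a" unfolding a'_def by (rule someI) (rule refl)
    then have "a' - a \<in> kerv v" using fa_eq_ker[OF v] by blast
    then have "f (a' - a) = 0" using fK by blast
    then have "f a' = f a" using lin_diff[OF f, of a' a] by simp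
    moreover have "\<psi> (snd v a) = enc (f a')" unfolding \<psi>_def a'_def by (rule refl)
    ultimately show ?thesis by simp
  qed
  have mul: "\<psi> (snd v a \<otimes>\<^bsub>fst v\<^esub> snd v b) = enc (of_nat (\<psi> (snd v a)) + of_nat (\<psi> (snd v b)) :: 'p mod_ring)" for a b
  proof -
    have "\<psi> (snd v a \<otimes>\<^bsub>fst v\<^esub> snd v b) = \<psi> (snd v (a + b))" using fa_add[OF v, of a b] by simp
    also have "\<dots> = enc (f a + f b)" using key lin_add[OF f] by simp
    finally show ?thesis using key of_nat_enc by simp
  qed
  have "\<psi> \<in> hom (fst (img v)) (fst (approx_of f))"
  proof (rule homI)
    fix x assume "x \<in> carrier (fst (img v))"
    then obtain a where "x = snd v a" by (auto simp: img_def)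
    then show "\<psi> x \<in> carrier (fst (approx_of f))" using key by (simp add: approx_of_def)
  next
    fix x y assume "x \<in> carrier (fst (img v))" "y \<in> carrier (fst (img v))"
    then obtain a b where "x = snd v a" "y = snd v b" by (auto simp: img_def)
    then show "\<psi> (x \<otimes>\<^bsub>fst (img v)\<^esub> y) = \<psi> x \<otimes>\<^bsub>fst (approx_of f)\<^esub> \<psi> y"
      using mul by (simp add: img_def approx_of_def)
  qed
  moreover have "\<forall>a\<in>carrier add_grp. \<psi> (snd (img v) a) = snd (approx_of f) a"
    using key by (simp add: img_def approx_of_def)
  ultimately have "approx_mor add_grp (img v) (approx_of f) \<psi>"
    unfolding approx_mor_def by blast
  then show ?thesis using key by blast
qed

lemma eval_rep:
  assumes x: "x \<in> carrier (prof_compl add_grp)" and v: "fin_approx add_grp v"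
    and xa: "x v = snd v a" and f: "lin f" and fK: "\<forall>a\<in>kerv v. f a = 0"
  shows "x (approx_of f) = enc (f a)"
proof -
  obtain \<psi> where \<psi>: "approx_mor add_grp (img v) (approx_of f) \<psi>" "\<forall>a. \<psi> (snd v a) = enc (f a)"
    using factor[OF v f fK] by blast
  have "\<psi> (x (img v)) = x (approx_of f)"
    using prof_compat[OF x img_fa[OF v] fa_approx_of[OF f] \<psi>(1)] .
  then show ?thesis using x_img(1)[OF x v] xa \<psi>(2) by simp
qed

lemma Psi_rep:
  assumes x: "x \<in> carrier (prof_compl add_grp)" and v: "fin_approx add_grp v"
    and xa: "x v = snd v a" and f: "lin f" and fK: "\<forall>a\<in>kerv v. f a = 0"
  shows "Psi scale x f = f a"
  using eval_rep[OF assms] f by (simp add: Psi_def)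


definition e2 :: "'p mod_ring \<times> 'p mod_ring \<Rightarrow> nat" where
  "e2 z = enc (fst z) + CARD('p) * enc (snd z)"
definition d2 :: "nat \<Rightarrow> 'p mod_ring \<times> 'p mod_ring" where
  "d2 n = (of_nat (n mod CARD('p)), of_nat (n div CARD('p)))"

lemma d2_e2: "d2 (e2 z) = z"
proof -
  have lt: "enc (fst z) < CARD('p)" by (rule enc_lt)
  have "(enc (fst z) + CARD('p) * enc (snd z)) mod CARD('p) = enc (fst z)" using lt by simp
  moreover have "(enc (fst z) + CARD('p) * enc (snd z)) div CARD('p) = enc (snd z)" using lt by simp
  ultimately show ?thesis unfolding d2_def e2_def by (simp add: prod_eq_iff)
qed

lemma Psi_in:
  assumes x: "x \<in> carrier (prof_compl add_grp)"
  shows "Psi scale x \<in> ddual_sp scale"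
proof -
  have out: "\<forall>f. f \<notin> dual_sp scale \<longrightarrow> Psi scale x f = 0" by (simp add: Psi_def)
  have add: "Psi scale x (\<lambda>v. f v + g v) = Psi scale x f + Psi scale x g" if lf: "lin f" and lg: "lin g" for f g
  proof -
    define h where "h = (\<lambda>x. (f x, g x))"
    have hadd: "h (a + b) = h a + h b" for a b
      unfolding h_def by (rule prod_eqI) (simp_all add: lin_add[OF lf] lin_add[OF lg])
    define v2 where "v2 = (egrp (e2 :: 'p mod_ring \<times> 'p mod_ring \<Rightarrow> nat) d2, e2 \<circ> h)"
    have v2: "fin_approx add_grp v2" unfolding v2_def
      by (rule fin_approx_egrp) (simp_all add: d2_e2 hadd)
    obtain a where xa: "x v2 = snd v2 a" using x_img(2)[OF x v2] by blast
    have van: "f b = 0 \<and> g b = 0" if "b \<in> kerv v2" for b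
    proof -
      have "e2 (h b) = e2 0" using that by (simp add: kerv_def v2_def egrp_def)
      then have "d2 (e2 (h b)) = d2 (e2 0)" by simp
      then have "h b = 0" by (simp add: d2_e2)
      then show ?thesis by (simp add: h_def prod_eq_iff)
    qed
    have lfg: "lin (\<lambda>v. f v + g v)" using VP.linear_compose_add[OF lf lg] .
    have "Psi scale x (\<lambda>v. f v + g v) = f a + g a"
      using Psi_rep[OF x v2 xa lfg] van by simp
    moreover have "Psi scale x f = f a" using Psi_rep[OF x v2 xa lf] van by simp
    moreover have "Psi scale x g = g a" using Psi_rep[OF x v2 xa lg] van by simp
    ultimately show ?thesis by simp
  qed
  have sc: "Psi scale x (\<lambda>v. c * f v) = c * Psi scale x f" if lf: "lin f" for c f
  proof -
    have v: "fin_approx add_grp (approx_of f)" using fa_approx_of[OF lf] .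
    obtain a where xa: "x (approx_of f) = snd (approx_of f) a" using x_img(2)[OF x v] by blast
    have van: "\<forall>b\<in>kerv (approx_of f). f b = 0" using kerv_approx_of by blast
    have "Psi scale x f = f a" using Psi_rep[OF x v xa lf van] .
    moreover have "Psi scale x (\<lambda>v. c * f v) = c * f a"
      using Psi_rep[OF x v xa lin_cmul[OF lf]] van by simp
    ultimately show ?thesis by simp
  qed
  show ?thesis unfolding ddual_sp_def using out add sc by simp
qed

lemma Psi_mult:
  assumes x: "x \<in> carrier (prof_compl add_grp)" and y: "y \<in> carrier (prof_compl add_grp)"
  shows "Psi scale (x \<otimes>\<^bsub>prof_compl add_grp\<^esub> y) = Psi scale x \<otimes>\<^bsub>ddual_grp scale\<^esub> Psi scale y"
proof
  fix f
  show "Psi scale (x \<otimes>\<^bsub>prof_compl add_grp\<^esub> y) f = (Psi scale x \<otimes>\<^bsub>ddual_grp scale\<^esub> Psi scale y) f"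
  proof (cases "lin f")
    case True
    then have v: "fin_approx add_grp (approx_of f)" by (rule fa_approx_of)
    show ?thesis using True v
      by (simp add: Psi_def prof_compl_def ddual_grp_def approx_of_def)
  next
    case False
    then show ?thesis by (simp add: Psi_def ddual_grp_def)
  qed
qed

lemma Psi_inj: "inj_on (Psi scale) (carrier (prof_compl add_grp))"
proof (rule inj_onI)
  fix x y assume x: "x \<in> carrier (prof_compl add_grp)" and y: "y \<in> carrier (prof_compl add_grp)"
    and eq: "Psi scale x = Psi scale y"
  show "x = y"
  proof
    fix v
    show "x v = y v"
    proof (cases "fin_approx add_grp v")
      case True
      obtain a where xa: "x v = snd v a" using x_img(2)[OF x True] by blast
      obtain b where yb: "y v = snd v b" using x_img(2)[OF y True] by blast
      have "snd v a = snd v b"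
      proof (rule fa_same[OF True])
        fix f assume lf: "lin f" and van: "\<forall>a\<in>kerv v. f a = 0"
        have "f a = Psi scale x f" using Psi_rep[OF x True xa lf van] by simp
        also have "\<dots> = Psi scale y f" using eq by simp
        also have "\<dots> = f b" using Psi_rep[OF y True yb lf van] .
        finally show "f a = f b" .
      qed
      then show ?thesis using xa yb by simp
    next
      case False
      then show ?thesis using prof_undef[OF x False] prof_undef[OF y False] by simp
    qed
  qed
qed

lemma Psi_surj:
  assumes P: "\<Phi> \<in> ddual_sp scale"
  shows "\<exists>x\<in>carrier (prof_compl add_grp). Psi scale x = \<Phi>"
proof -
  define R where "R v u \<longleftrightarrow> (\<forall>f. lin f \<and> (\<forall>a\<in>kerv v. f a = 0) \<longrightarrow> f u = \<Phi> f)" for v u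
  have exR: "\<exists>u. R v u" if v: "fin_approx add_grp v" for v
    unfolding R_def
    by (rule rep[OF kerv_subspace[OF v] fa_finite[OF v] _ P]) (simp add: fa_eq_ker[OF v, symmetric])
  define U where "U v = (SOME u. R v u)" for v
  have RU: "R v (U v)" if "fin_approx add_grp v" for v
    unfolding U_def using exR[OF that] by (rule someI_ex)
  define x where "x v = (if fin_approx add_grp v then snd v (U v) else undefined)" for v
  have c1: "\<forall>v. fin_approx add_grp v \<longrightarrow> x v \<in> carrier (fst v)"
  proof (intro allI impI)
    fix v :: "nat monoid \<times> ('v \<Rightarrow> nat)" assume "fin_approx add_grp v"
    then show "x v \<in> carrier (fst v)" unfolding x_def using fa_in by simp
  qed
  have c2: "\<forall>v. \<not> fin_approx add_grp v \<longrightarrow> x v = undefined" unfolding x_def by simp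
  have c3: "\<psi> (x v) = x w" if v: "fin_approx add_grp v" and w: "fin_approx add_grp w"
    and m: "approx_mor add_grp v w \<psi>" for v w \<psi>
  proof -
    have hm: "\<psi> \<in> hom (fst v) (fst w)" and comm: "\<And>a. \<psi> (snd v a) = snd w a"
      using m unfolding approx_mor_def by auto
    have gh: "group_hom (fst v) (fst w) \<psi>"
      unfolding group_hom_def group_hom_axioms_def using fa_grp[OF v] fa_grp[OF w] hm by blast
    have kk: "a \<in> kerv w" if "a \<in> kerv v" for a
    proof -
      have "snd w a = \<psi> (\<one>\<^bsub>fst v\<^esub>)" using that comm[of a] by (simp add: kerv_def)
      also have "\<dots> = \<one>\<^bsub>fst w\<^esub>" by (rule group_hom.hom_one[OF gh])
      finally show ?thesis by (simp add: kerv_def)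
    qed
    have "snd w (U v) = snd w (U w)"
    proof (rule fa_same[OF w])
      fix f assume lf: "lin f" and van: "\<forall>a\<in>kerv w. f a = 0"
      have van': "\<forall>a\<in>kerv v. f a = 0" using van kk by blast
      have "f (U v) = \<Phi> f" using RU[OF v] lf van' unfolding R_def by blast
      moreover have "f (U w) = \<Phi> f" using RU[OF w] lf van unfolding R_def by blast
      ultimately show "f (U v) = f (U w)" by simp
    qed
    then show ?thesis using comm[of "U v"] v w unfolding x_def by simp
  qed
  have xc: "x \<in> carrier (prof_compl add_grp)"
    unfolding prof_carrier_unf mem_Collect_eq using c1 c2 c3 by blast
  have "Psi scale x = \<Phi>"
  proof
    fix f
    show "Psi scale x f = \<Phi> f"
    proof (cases "lin f")
      case True
      have v: "fin_approx add_grp (approx_of f)" using fa_approx_of[OF True] .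
      have van: "\<forall>b\<in>kerv (approx_of f). f b = 0" using kerv_approx_of by blast
      have "f (U (approx_of f)) = \<Phi> f" using RU[OF v] True van unfolding R_def by blast
      then show ?thesis using True v unfolding Psi_def x_def by (simp add: approx_of_def)
    next
      case False
      then show ?thesis using dd_out[OF P False] by (simp add: Psi_def)
    qed
  qed
  then show ?thesis using xc by blast
qed

lemma main_iso: "Psi scale \<in> iso (prof_compl add_grp) (ddual_grp scale)"
proof -
  have hom: "Psi scale \<in> hom (prof_compl add_grp) (ddual_grp scale)"
  proof (rule homI)
    fix x :: "nat monoid \<times> ('v \<Rightarrow> nat) \<Rightarrow> nat" assume "x \<in> carrier (prof_compl add_grp)"
    then show "Psi scale x \<in> carrier (ddual_grp scale)" using Psi_in by (simp add: ddual_grp_def)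
  next
    fix x y :: "nat monoid \<times> ('v \<Rightarrow> nat) \<Rightarrow> nat"
    assume "x \<in> carrier (prof_compl add_grp)" "y \<in> carrier (prof_compl add_grp)"
    then show "Psi scale (x \<otimes>\<^bsub>prof_compl add_grp\<^esub> y) = Psi scale x \<otimes>\<^bsub>ddual_grp scale\<^esub> Psi scale y"
      by (rule Psi_mult)
  qed
  have img: "Psi scale ` carrier (prof_compl add_grp) = carrier (ddual_grp scale)"
  proof
    show "Psi scale ` carrier (prof_compl add_grp) \<subseteq> carrier (ddual_grp scale)"
      using Psi_in by (auto simp: ddual_grp_def)
  next
    show "carrier (ddual_grp scale) \<subseteq> Psi scale ` carrier (prof_compl add_grp)"
    proof
      fix \<Phi> assume "\<Phi> \<in> carrier (ddual_grp scale)"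
      then have "\<Phi> \<in> ddual_sp scale" by (simp add: ddual_grp_def)
      then obtain x where "x \<in> carrier (prof_compl add_grp)" "Psi scale x = \<Phi>" using Psi_surj by blast
      then show "\<Phi> \<in> Psi scale ` carrier (prof_compl add_grp)" by blast
    qed
  qed
  show ?thesis unfolding iso_def bij_betw_def using hom Psi_inj img by blast
qed

lemma main_proj: "Psi scale (prof_proj add_grp v) = can_map scale v"
proof
  fix f
  show "Psi scale (prof_proj add_grp v) f = can_map scale v f"
  proof (cases "lin f")
    case True
    then show ?thesis using fa_approx_of[OF True]
      by (simp add: Psi_def prof_proj_def can_map_def approx_of_def)
  next
    case False
    then show ?thesis by (simp add: Psi_def can_map_def)
  qed
qed

end

theorem mainTheorem4:
  fixes scale :: "'p::prime_card mod_ring \<Rightarrow> 'v::ab_group_add \<Rightarrow> 'v"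
  assumes "vector_space scale"
  shows "Psi scale \<in> iso (prof_compl add_grp) (ddual_grp scale)
    \<and> (\<forall>v. Psi scale (prof_proj add_grp v) = can_map scale v)"
  using main_iso[OF assms] main_proj[OF assms] by blast

end
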